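(* For every ribbon graph $\mathbb{G}$, the $\Delta$-matroid $D(\mathbb{G})=(E(\mathbb{G}),\mathcal{Q}(\mathbb{G}))$ is strong.
   Context: A ribbon graph $\mathbb{G}$ is a surface with boundary written as the union of vertex discs $V(\mathbb{G})$ and edge discs $E(\mathbb{G})$ meeting in disjoint line segments, each on the boundary of exactly one vertex and exactly one edge, with each edge containing exactly two such segments. For connected $\mathbb{G}$, a quasi-tree is $F\subseteq E(\mathbb{G})$ such that the spanning ribbon subgraph $(V(\mathbb{G}),F)$ has exactly one boundary component; in general, a union of quasi-trees of the components. $\mathcal{Q}(\mathbb{G})$ is the set of quasi-trees. A $\Delta$-matroid $(E,\mathcal{B})$ is strong if for all $B,B'\in\mathcal{B}$ and $x\in B\triangle B'$ there is $y\in B\triangle B'$ with both $B\triangle\{x,y\}\in\mathcal{B}$ and $B'\triangle\{x,y\}\in\mathcal{B}$. *)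

theory Defs
  imports Main
begin

text \<open>Each edge e has two ends (i :: bool); the end (e,i) is attached to the vertex
  disc rinc G e i along a line segment.  Each attaching segment has two endpoints
  ("corners") (e,i,j), j :: bool.  Going around the boundary circle of a vertex
  disc one alternately traverses attaching segments (joining (e,i,j) to (e,i,~j))
  and free vertex-boundary arcs; ralpha G pairs the two endpoints of each free
  vertex-boundary arc.  The two non-attached sides of the edge rectangle of e join
  (e,False,j) to (e,True,j) if e is untwisted and to (e,True,~j) if e is twisted.\<close>

type_synonym 'e corner = "'e \<times> bool \<times> bool"

record ('v, 'e) ribbon_graph =
  rverts :: "'v set"
  redges :: "'e set"
  rinc   :: "'e \<Rightarrow> bool \<Rightarrow> 'v"
  ralpha :: "'e corner \<Rightarrow> 'e corner"
  rtwist :: "'e \<Rightarrow> bool"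

definition corners_of :: "'e set \<Rightarrow> 'e corner set" where
  "corners_of A = {c. fst c \<in> A}"

definition cbeta :: "'e corner \<Rightarrow> 'e corner" where
  "cbeta c = (case c of (e, i, j) \<Rightarrow> (e, i, \<not> j))"

definition ceps :: "('v, 'e, 'z) ribbon_graph_scheme \<Rightarrow> 'e corner \<Rightarrow> 'e corner" where
  "ceps G c = (case c of (e, i, j) \<Rightarrow> (e, \<not> i, j \<noteq> rtwist G e))"

definition cvert :: "('v, 'e, 'z) ribbon_graph_scheme \<Rightarrow> 'e corner \<Rightarrow> 'v" where
  "cvert G c = (case c of (e, i, j) \<Rightarrow> rinc G e i)"

definition vertex_circle_rel :: "('v, 'e, 'z) ribbon_graph_scheme \<Rightarrow> ('e corner \<times> 'e corner) set" where
  "vertex_circle_rel G =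
     {(c, d). c \<in> corners_of (redges G) \<and> (d = ralpha G c \<or> d = cbeta c)}"

definition ribbon_graph :: "('v, 'e, 'z) ribbon_graph_scheme \<Rightarrow> bool" where
  "ribbon_graph G \<longleftrightarrow>
     finite (rverts G) \<and> finite (redges G) \<and>
     (\<forall>e \<in> redges G. \<forall>i. rinc G e i \<in> rverts G) \<and>
     (\<forall>c \<in> corners_of (redges G).
        ralpha G c \<in> corners_of (redges G) \<and> ralpha G (ralpha G c) = c \<and>
        ralpha G c \<noteq> c \<and> cvert G (ralpha G c) = cvert G c) \<and>
     (\<forall>c \<in> corners_of (redges G). \<forall>d \<in> corners_of (redges G).
        cvert G c = cvert G d \<longrightarrow> (c, d) \<in> (vertex_circle_rel G)\<^sup>*)"

definition adj_rel :: "('v, 'e, 'z) ribbon_graph_scheme \<Rightarrow> ('v \<times> 'v) set" where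
  "adj_rel G = {(rinc G e i, rinc G e (\<not> i)) | e i. e \<in> redges G}"

definition components :: "('v, 'e, 'z) ribbon_graph_scheme \<Rightarrow> 'v set set" where
  "components G = rverts G // (adj_rel G)\<^sup>*"

definition edges_at :: "('v, 'e, 'z) ribbon_graph_scheme \<Rightarrow> 'v set \<Rightarrow> 'e set" where
  "edges_at G C = {e \<in> redges G. rinc G e False \<in> C \<or> rinc G e True \<in> C}"

definition isolated_in :: "('v, 'e, 'z) ribbon_graph_scheme \<Rightarrow> 'v set \<Rightarrow> 'v set" where
  "isolated_in G C = {v \<in> C. \<forall>e \<in> redges G. \<forall>i. rinc G e i \<noteq> v}"

text \<open>One step along the boundary of the spanning ribbon subgraph with edge set F:
  free vertex arcs always; attaching segments of edges not in F; free sides of edges in F.\<close>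
definition bstep :: "('v, 'e, 'z) ribbon_graph_scheme \<Rightarrow> 'e set \<Rightarrow> ('e corner \<times> 'e corner) set" where
  "bstep G F = {(c, d). d = ralpha G c \<or> (fst c \<notin> F \<and> d = cbeta c) \<or> (fst c \<in> F \<and> d = ceps G c)}"

definition boundary_rel ::
  "('v, 'e, 'z) ribbon_graph_scheme \<Rightarrow> 'v set \<Rightarrow> 'e set \<Rightarrow> ('e corner \<times> 'e corner) set" where
  "boundary_rel G C F =
     {(c, d). c \<in> corners_of (edges_at G C) \<and> d \<in> corners_of (edges_at G C) \<and>
              ((c, d) \<in> bstep G F \<or> (d, c) \<in> bstep G F)}"

text \<open>Number of boundary components of the ribbon subgraph with vertex set C
  (a union of components) and edge set F \<inter> edges_at G C.\<close>
definition num_boundary_components ::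
  "('v, 'e, 'z) ribbon_graph_scheme \<Rightarrow> 'v set \<Rightarrow> 'e set \<Rightarrow> nat" where
  "num_boundary_components G C F =
     card (corners_of (edges_at G C) // (boundary_rel G C (F \<inter> edges_at G C))\<^sup>*)
     + card (isolated_in G C)"

text \<open>Quasi-trees: unions of quasi-trees of the connected components.\<close>
definition quasi_trees :: "('v, 'e, 'z) ribbon_graph_scheme \<Rightarrow> 'e set set" where
  "quasi_trees G = {F. F \<subseteq> redges G \<and>
     (\<forall>C \<in> components G. num_boundary_components G C F = 1)}"

definition symdiff :: "'a set \<Rightarrow> 'a set \<Rightarrow> 'a set" where
  "symdiff A B = (A - B) \<union> (B - A)"

definition delta_matroid :: "'a set \<Rightarrow> 'a set set \<Rightarrow> bool" where
  "delta_matroid E \<B> \<longleftrightarrow> finite E \<and> \<B> \<noteq> {} \<and> (\<forall>B \<in> \<B>. B \<subseteq> E) \<and>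
     (\<forall>B \<in> \<B>. \<forall>B' \<in> \<B>. \<forall>x \<in> symdiff B B'.
        \<exists>y \<in> symdiff B B'. symdiff B {x, y} \<in> \<B>)"

definition strong_delta_matroid :: "'a set \<Rightarrow> 'a set set \<Rightarrow> bool" where
  "strong_delta_matroid E \<B> \<longleftrightarrow> delta_matroid E \<B> \<and>
     (\<forall>B \<in> \<B>. \<forall>B' \<in> \<B>. \<forall>x \<in> symdiff B B'.
        \<exists>y \<in> symdiff B B'. symdiff B {x, y} \<in> \<B> \<and> symdiff B' {x, y} \<in> \<B>)"

end

theory Submission
  imports Defs
begin


lemma corners_of_eq: "corners_of E = E \<times> UNIV"
  by (auto simp: corners_of_def)

definition blk :: "'e \<Rightarrow> 'e corner set" where
  "blk e = {(e,False,False),(e,False,True),(e,True,False),(e,True,True)}"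

definition kl :: "'e corner set \<Rightarrow> 'e \<Rightarrow> bool \<times> bool" where
  "kl Z e = (((e,False,False) \<in> Z) \<noteq> ((e,False,True) \<in> Z), ((e,False,False) \<in> Z) \<noteq> ((e,True,False) \<in> Z))"

definition evb :: "'e corner set \<Rightarrow> 'e \<Rightarrow> bool" where
  "evb Z e = ((((e,False,False) \<in> Z) \<noteq> ((e,False,True) \<in> Z)) = (((e,True,False) \<in> Z) \<noteq> ((e,True,True) \<in> Z)))"

definition kadd :: "bool \<times> bool \<Rightarrow> bool \<times> bool \<Rightarrow> bool \<times> bool" where
  "kadd a b = (fst a \<noteq> fst b, snd a \<noteq> snd b)"

definition om :: "bool \<times> bool \<Rightarrow> bool \<times> bool \<Rightarrow> bool" where
  "om a b = ((fst a \<and> snd b) \<noteq> (snd a \<and> fst b))"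

abbreviation kz :: "bool \<times> bool" where "kz \<equiv> (False, False)"

definition mstep :: "('e \<Rightarrow> bool \<times> bool) \<Rightarrow> 'e corner \<Rightarrow> 'e corner" where
  "mstep L c = (case c of (e,i,j) \<Rightarrow> if fst (L e) then (e, \<not> i, j \<noteq> snd (L e)) else (e, i, \<not> j))"

lemma mstep_simp: "mstep L (e,i,j) = (if fst (L e) then (e, \<not> i, j \<noteq> snd (L e)) else (e, i, \<not> j))"
  by (simp add: mstep_def)

lemma mstep_fst[simp]: "fst (mstep L c) = fst c"
  by (cases c) (auto simp: mstep_def)

lemma mstep_inv[simp]: "mstep L (mstep L c) = c"
  by (cases c) (auto simp: mstep_def)

lemma mstep_neq: "mstep L c \<noteq> c"
  by (cases c) (auto simp: mstep_def)

lemma all_bool2: "(\<forall>i j. P (i::bool) (j::bool)) \<longleftrightarrow> P False False \<and> P False True \<and> P True False \<and> P True True"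
  by (metis (full_types))

lemma block_closed_iff:
  assumes "L e \<noteq> kz"
  shows "(\<forall>i j. (e,i,j) \<in> Z \<longrightarrow> mstep L (e,i,j) \<in> Z) \<longleftrightarrow> evb Z e \<and> (kl Z e = kz \<or> kl Z e = L e)"
proof -
  obtain p r where L: "L e = (p,r)" by (cases "L e")
  show ?thesis using assms unfolding all_bool2 mstep_simp evb_def kl_def L
    by (cases p; cases r; simp; blast)
qed

lemma card_int_sum: "finite B \<Longrightarrow> card (Z \<inter> B) = (\<Sum>x\<in>B. of_bool (x \<in> Z))"
  by (induct rule: finite_induct) (auto simp: Int_insert_right card_insert_if)

lemma card_blk_int:
  "card (Z \<inter> blk e) = of_bool ((e,False,False) \<in> Z) + of_bool ((e,False,True) \<in> Z)
     + of_bool ((e,True,False) \<in> Z) + of_bool ((e,True,True) \<in> Z)"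
  by (subst card_int_sum) (auto simp: blk_def)

lemma even_add_of_bool: "even (n + of_bool a) \<longleftrightarrow> (even (n::nat) \<longleftrightarrow> \<not> a)"
  by (cases a) auto

lemma even_blk_iff: "even (card (Z \<inter> blk e)) \<longleftrightarrow> evb Z e"
  unfolding card_blk_int evb_def even_add_of_bool by auto

lemma om_blk:
  assumes "evb Z e" "evb W e"
  shows "even (card (Z \<inter> W \<inter> blk e)) \<longleftrightarrow> \<not> om (kl Z e) (kl W e)"
  using assms unfolding card_blk_int evb_def kl_def om_def even_add_of_bool by auto

lemma kl_symdiff: "kl (symdiff Z W) e = kadd (kl Z e) (kl W e)"
  unfolding kl_def kadd_def symdiff_def by auto

lemma evb_symdiff: "evb Z e \<Longrightarrow> evb W e \<Longrightarrow> evb (symdiff Z W) e"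
  unfolding evb_def symdiff_def by auto



lemma even_card_inv:
  "finite A \<Longrightarrow> (\<forall>c\<in>A. f c \<in> A \<and> f (f c) = c \<and> f c \<noteq> c) \<Longrightarrow> even (card A)"
proof (induction "card A" arbitrary: A rule: less_induct)
  case less
  show ?case
  proof (cases "A = {}")
    case True thus ?thesis by simp
  next
    case False
    then obtain c where c: "c \<in> A" by blast
    let ?A = "A - {c, f c}"
    have fc: "f c \<in> A" "f c \<noteq> c" using less.prems c by auto
    have sub: "{c, f c} \<subseteq> A" using c fc by auto
    have c2: "card {c, f c} = 2" using fc by auto
    have cardA: "card ?A = card A - 2"
      using card_Diff_subset[OF _ sub] less.prems(1) c2 by (simp add: finite_subset[OF sub])
    have ge: "card A \<ge> 2" using card_mono[OF less.prems(1) sub] c2 by simp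
    have cl: "\<forall>d\<in>?A. f d \<in> ?A \<and> f (f d) = d \<and> f d \<noteq> d"
    proof
      fix d assume d: "d \<in> ?A"
      have "f d \<in> A" "f (f d) = d" "f d \<noteq> d" using less.prems d by auto
      moreover have "f d \<noteq> c" using \<open>f (f d) = d\<close> d by auto
      moreover have "f d \<noteq> f c"
        using \<open>f (f d) = d\<close> d less.prems c by (metis DiffD2 insertI1)
      ultimately show "f d \<in> ?A \<and> f (f d) = d \<and> f d \<noteq> d" by auto
    qed
    have "even (card ?A)"
      by (rule less.hyps) (use cardA ge c less.prems(1) cl in auto)
    thus ?thesis using cardA ge by (metis add_diff_inverse_nat even_add dvd_refl not_less)
  qed
qed

lemma even_sum_cong:
  fixes f g :: "'a \<Rightarrow> nat"
  shows "(\<forall>a\<in>A. even (f a) = even (g a)) \<Longrightarrow> even (sum f A) = even (sum g A)"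
  by (induct A rule: infinite_finite_induct) auto

definition relE :: "'a set set \<Rightarrow> ('a \<times> 'a) set" where
  "relE Es = {(a,b). \<exists>s\<in>Es. a \<in> s \<and> b \<in> s}"

lemma merge_rtrancl:
  assumes "(x,y) \<in> (R \<union> {a,b} \<times> {a,b})\<^sup>*"
  shows "(x,y) \<in> R\<^sup>* \<or> (((x,a) \<in> R\<^sup>* \<or> (x,b) \<in> R\<^sup>*) \<and> ((a,y) \<in> R\<^sup>* \<or> (b,y) \<in> R\<^sup>*))"
  using assms
proof (induction rule: rtrancl_induct)
  case base then show ?case by simp
next
  case (step y z)
  from step.hyps(2) show ?case
  proof
    assume "(y,z) \<in> R"
    with step.IH show ?case by (meson rtrancl.rtrancl_into_rtrancl)
  next
    assume yz: "(y,z) \<in> {a,b} \<times> {a,b}"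
    from step.IH show ?case
    proof
      assume "(x,y) \<in> R\<^sup>*" then show ?case using yz by auto
    next
      assume h: "((x,a) \<in> R\<^sup>* \<or> (x,b) \<in> R\<^sup>*) \<and> ((a,y) \<in> R\<^sup>* \<or> (b,y) \<in> R\<^sup>*)"
      then show ?case using yz by auto
    qed
  qed
qed

lemma quotient_image: "W // r = (\<lambda>x. r``{x}) ` W"
  by (auto simp: quotient_def)

lemma class_eq: "sym S \<Longrightarrow> trans S \<Longrightarrow> (x,y) \<in> S \<Longrightarrow> S``{x} = S``{y}"
  by (auto dest: symD transD)

lemma card_quot_merge:
  assumes fin: "finite W" and symR: "sym R"
  shows "card (W // R\<^sup>*) \<le> card (W // (R \<union> {a,b} \<times> {a,b})\<^sup>*) + 1"
proof -
  let ?S = "R\<^sup>*" let ?S' = "(R \<union> {a,b}\<times>{a,b})\<^sup>*"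
  have SS: "?S \<subseteq> ?S'" by (rule rtrancl_mono) auto
  have symS: "sym ?S" using symR by (rule sym_rtrancl)
  have trS: "trans ?S" by (rule trans_rtrancl)
  define f where "f X = ?S' `` X" for X
  have fx: "f (?S``{x}) = ?S'``{x}" for x
    unfolding f_def using SS by (auto intro: rtrancl_trans)
  have inj: "inj_on f (W // ?S - {?S `` {a}})"
  proof (rule inj_onI)
    fix X Y assume X: "X \<in> W // ?S - {?S``{a}}" and Y: "Y \<in> W // ?S - {?S``{a}}" and eq: "f X = f Y"
    from X obtain x where x: "x \<in> W" "X = ?S``{x}" by (auto elim: quotientE)
    from Y obtain y where y: "y \<in> W" "Y = ?S``{y}" by (auto elim: quotientE)
    have "y \<in> ?S'``{x}" using eq fx x y by auto
    hence xy: "(x,y) \<in> ?S'" by simp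
    have nxa: "(x,a) \<notin> ?S" using X x class_eq[OF symS trS] by auto
    have nay: "(a,y) \<notin> ?S" using Y y class_eq[OF symS trS] symS by (metis DiffD2 singletonI symD)
    from merge_rtrancl[OF xy] nxa nay have "(x,y) \<in> ?S"
      by (meson rtrancl_trans)
    thus "X = Y" using x y class_eq[OF symS trS] by simp
  qed
  have img: "f ` (W // ?S - {?S``{a}}) \<subseteq> W // ?S'"
    using fx by (auto elim!: quotientE intro: quotientI)
  have finq: "finite (W // ?S')" using fin by (simp add: quotient_image)
  have "card (W // ?S - {?S``{a}}) \<le> card (W // ?S')"
    using card_inj_on_le[OF inj img finq] .
  moreover have "card (W // ?S) \<le> card (W // ?S - {?S``{a}}) + 1"
    using fin by (cases "?S``{a} \<in> W // ?S") (auto simp: card_Diff_singleton_if quotient_image)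
  ultimately show ?thesis by linarith
qed

lemma card_quot_relE:
  assumes "finite W" "finite Es" "\<forall>s\<in>Es. \<exists>a\<in>W. \<exists>b\<in>W. s = {a,b}"
  shows "card W \<le> card (W // (relE Es)\<^sup>*) + card Es"
  using assms(2,3)
proof (induction Es rule: finite_induct)
  case empty
  have h: "\<And>x. x \<in> W \<Longrightarrow> (relE {})\<^sup>* `` {x} = {x}" by (simp add: relE_def)
  hence "W // (relE {})\<^sup>* = (\<lambda>x. {x}) ` W" unfolding quotient_image by simp
  moreover have "card ((\<lambda>x. {x}) ` W) = card W" by (rule card_image) (auto simp: inj_on_def)
  ultimately show ?case by simp
next
  case (insert s Es)
  obtain a b where ab: "a \<in> W" "b \<in> W" "s = {a,b}" using insert.prems by auto
  have eq: "relE (insert s Es) = relE Es \<union> {a,b} \<times> {a,b}" by (auto simp: relE_def ab)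
  have sy: "sym (relE Es)" by (auto simp: relE_def sym_def)
  have "card W \<le> card (W // (relE Es)\<^sup>*) + card Es" using insert by auto
  moreover have "card (W // (relE Es)\<^sup>*) \<le> card (W // (relE (insert s Es))\<^sup>*) + 1"
    unfolding eq by (rule card_quot_merge[OF assms(1) sy])
  ultimately show ?case using insert.hyps by simp
qed

lemma card_pairs:
  assumes "finite A" "\<forall>c\<in>A. f c \<in> A \<and> f (f c) = c \<and> f c \<noteq> c"
  shows "2 * card ((\<lambda>c. {c, f c}) ` A) = card A"
proof -
  let ?C = "(\<lambda>c. {c, f c}) ` A"
  have U: "\<Union>?C = A" using assms(2) by auto
  have "2 * card ?C = card (\<Union>?C)"
    apply (rule card_partition)
    using assms U apply (auto simp: card_insert_if)
    apply metis+
    done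
  thus ?thesis using U by simp
qed



lemma blk_eq: "blk e = {e} \<times> UNIV"
  unfolding blk_def by (auto; metis (full_types))

lemma blk_mem: "c \<in> blk e \<longleftrightarrow> fst c = e"
  by (cases c) (auto simp: blk_eq)

lemma card_blk: "card (blk e) = 4"
  unfolding blk_def by simp

lemma kl_empty[simp]: "kl {} e = kz" by (simp add: kl_def)

lemma kadd_self[simp]: "kadd a a = kz" by (simp add: kadd_def)
lemma kadd_kz[simp]: "kadd a kz = a" "kadd kz a = a" by (auto simp: kadd_def)
lemma kadd_eq_kz: "kadd a b = kz \<longleftrightarrow> a = b" by (cases a; cases b) (auto simp: kadd_def)
lemma om_same: "a \<in> {kz, l} \<Longrightarrow> b \<in> {kz, l} \<Longrightarrow> \<not> om a b"
  by (cases l) (auto simp: om_def)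
lemma om_diff: "l \<noteq> l' \<Longrightarrow> l \<noteq> kz \<Longrightarrow> l' \<noteq> kz \<Longrightarrow> a \<in> {kz,l} \<Longrightarrow> b \<in> {kz,l'} \<Longrightarrow> om a b = (a \<noteq> kz \<and> b \<noteq> kz)"
  by (cases l; cases l'; cases a; cases b) (auto simp: om_def)
lemma kadd_line: "a \<in> {kz, l} \<Longrightarrow> b \<in> {kz, l} \<Longrightarrow> kadd a b \<in> {kz, l}"
  by (cases l) (auto simp: kadd_def)
lemma kadd_comm: "kadd a b = kadd b a" by (auto simp: kadd_def)

locale cstr =
  fixes E :: "'e set" and al :: "'e corner \<Rightarrow> 'e corner" and tw :: "'e \<Rightarrow> bool"
  assumes finE: "finite E" and neE: "E \<noteq> {}"
  and aK: "c \<in> corners_of E \<Longrightarrow> al c \<in> corners_of E"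
  and ainv: "c \<in> corners_of E \<Longrightarrow> al (al c) = c"
  and afp: "c \<in> corners_of E \<Longrightarrow> al c \<noteq> c"
  and conn: "X \<subseteq> corners_of E \<Longrightarrow> X \<noteq> {} \<Longrightarrow> (\<forall>c\<in>X. al c \<in> X) \<Longrightarrow>
             (\<forall>c\<in>X. \<forall>i j. (fst c,i,j) \<in> X) \<Longrightarrow> X = corners_of E"
begin

abbreviation K where "K \<equiv> corners_of E"

definition inZ where "inZ Z \<longleftrightarrow> Z \<subseteq> K \<and> (\<forall>c\<in>Z. al c \<in> Z) \<and> (\<forall>e\<in>E. evb Z e)"
definition compat where "compat L Z \<longleftrightarrow> inZ Z \<and> (\<forall>e\<in>E. kl Z e = kz \<or> kl Z e = L e)"
definition nz where "nz Z \<longleftrightarrow> (\<exists>e\<in>E. kl Z e \<noteq> kz)"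
definition singleL where "singleL L \<longleftrightarrow> (\<forall>Z. compat L Z \<longrightarrow> \<not> nz Z)"
definition lam where "lam F e = (if e \<in> F then (True, tw e) else (False, True))"
definition gam where "gam e = (True, \<not> tw e)"
definition bR where "bR F = {(c,d). c \<in> K \<and> d \<in> K \<and>
   (d = al c \<or> d = mstep (lam F) c \<or> c = al d \<or> c = mstep (lam F) d)}"
definition Qc where "Qc Z = card {e\<in>E. kl Z e = gam e}"

lemma finK: "finite K" using finE by (simp add: corners_of_eq)

lemma memK: "c \<in> K \<longleftrightarrow> fst c \<in> E" by (simp add: corners_of_def)

lemma blk_sub: "e \<in> E \<Longrightarrow> blk e \<subseteq> K" by (auto simp: memK blk_mem)

lemma lam_nz[simp]: "lam F e \<noteq> kz" by (simp add: lam_def)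
lemma gam_nz[simp]: "gam e \<noteq> kz" by (simp add: gam_def)
lemma lam_gam[simp]: "lam F e \<noteq> gam e" "gam e \<noteq> lam F e" by (auto simp: lam_def gam_def)
lemma lam_diff: "e \<in> symdiff F F' \<Longrightarrow> lam F e \<noteq> lam F' e"
  by (auto simp: lam_def symdiff_def)
lemma lam_same: "e \<notin> symdiff F F' \<Longrightarrow> lam F e = lam F' e"
  by (auto simp: lam_def symdiff_def)
lemma lam_add: "e \<in> symdiff F F' \<Longrightarrow> kadd (lam F e) (lam F' e) = gam e"
  by (auto simp: lam_def symdiff_def gam_def kadd_def)
lemma lam_add2: "e \<in> symdiff F F' \<Longrightarrow> kadd (lam F e) (gam e) = lam F' e"
  by (auto simp: lam_def symdiff_def gam_def kadd_def)
lemma lam_other: "e \<in> symdiff F F' \<Longrightarrow> a \<noteq> kz \<Longrightarrow> a \<noteq> lam F e \<Longrightarrow> a = lam F' e \<or> a = gam e"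
  by (cases a) (auto simp: lam_def symdiff_def gam_def)
lemma lam_tog: "S \<subseteq> symdiff F F' \<Longrightarrow> lam (symdiff F S) e = (if e \<in> S then lam F' e else lam F e)"
  by (auto simp: lam_def symdiff_def)
lemma symdiff_comm: "symdiff A B = symdiff B A" by (auto simp: symdiff_def)

lemma card_sum_blk: "Z \<subseteq> K \<Longrightarrow> card Z = (\<Sum>e\<in>E. card (Z \<inter> blk e))"
proof -
  assume Z: "Z \<subseteq> K"
  have "Z = (\<Union>e\<in>E. Z \<inter> blk e)" using Z by (auto simp: memK blk_mem)
  hence "card Z = card (\<Union>e\<in>E. Z \<inter> blk e)" by simp
  also have "\<dots> = (\<Sum>e\<in>E. card (Z \<inter> blk e))"
    by (rule card_UN_disjoint) (auto simp: finE blk_eq)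
  finally show ?thesis .
qed

lemma even_alclosed: "Z \<subseteq> K \<Longrightarrow> \<forall>c\<in>Z. al c \<in> Z \<Longrightarrow> even (card Z)"
  by (rule even_card_inv[where f=al]) (use finK ainv afp in \<open>auto intro: finite_subset\<close>)

lemma isotropy:
  assumes "inZ Z" "inZ W"
  shows "even (card {e\<in>E. om (kl Z e) (kl W e)})"
proof -
  have sub: "Z \<inter> W \<subseteq> K" using assms by (auto simp: inZ_def)
  have "even (card (Z \<inter> W))"
    using assms by (intro even_alclosed) (auto simp: inZ_def)
  hence "even (\<Sum>e\<in>E. card (Z \<inter> W \<inter> blk e))" using card_sum_blk[OF sub] by simp
  moreover have "\<forall>e\<in>E. even (card (Z \<inter> W \<inter> blk e)) = even (of_bool (om (kl Z e) (kl W e)) :: nat)"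
  proof
    fix e assume "e \<in> E"
    hence "evb Z e" "evb W e" using assms by (auto simp: inZ_def)
    thus "even (card (Z \<inter> W \<inter> blk e)) = even (of_bool (om (kl Z e) (kl W e)) :: nat)"
      using om_blk[of Z e W] by simp
  qed
  ultimately have "even (\<Sum>e\<in>E. (of_bool (om (kl Z e) (kl W e)) :: nat))"
    using even_sum_cong[of E "\<lambda>e. card (Z \<inter> W \<inter> blk e)" "\<lambda>e. of_bool (om (kl Z e) (kl W e))"]
    by simp
  moreover have "(\<Sum>e\<in>E. (of_bool (om (kl Z e) (kl W e)) :: nat)) = card {e\<in>E. om (kl Z e) (kl W e)}"
    using finE by (simp add: sum_of_bool_eq Collect_conj_eq)
  ultimately show ?thesis by simp
qed

lemma iso_set:
  assumes "inZ Z" "inZ W" "S \<subseteq> E" "\<forall>e\<in>E. om (kl Z e) (kl W e) = (e \<in> S)"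
  shows "even (card S)"
proof -
  have "{e\<in>E. om (kl Z e) (kl W e)} = S" using assms(3,4) by auto
  thus ?thesis using isotropy[OF assms(1,2)] by simp
qed

lemma inZ_symdiff: "inZ Z \<Longrightarrow> inZ W \<Longrightarrow> inZ (symdiff Z W)"
  unfolding inZ_def
proof (intro conjI ballI)
  assume h: "Z \<subseteq> K \<and> (\<forall>c\<in>Z. al c \<in> Z) \<and> (\<forall>e\<in>E. evb Z e)"
     "W \<subseteq> K \<and> (\<forall>c\<in>W. al c \<in> W) \<and> (\<forall>e\<in>E. evb W e)"
  show "symdiff Z W \<subseteq> K" using h by (auto simp: symdiff_def)
  fix c assume c: "c \<in> symdiff Z W"
  have cK: "c \<in> K" using c h by (auto simp: symdiff_def)
  show "al c \<in> symdiff Z W"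
    using c h ainv[OF cK] by (auto simp: symdiff_def)
next
  fix e assume "e \<in> E" "Z \<subseteq> K \<and> (\<forall>c\<in>Z. al c \<in> Z) \<and> (\<forall>e\<in>E. evb Z e)"
     "W \<subseteq> K \<and> (\<forall>c\<in>W. al c \<in> W) \<and> (\<forall>e\<in>E. evb W e)"
  thus "evb (symdiff Z W) e" by (simp add: evb_symdiff)
qed

lemma inZ_empty: "inZ {}" by (simp add: inZ_def evb_def)

lemma quad_blk: "even (of_bool (kadd a b = g) :: nat) =
   even (of_bool (a = g) + of_bool (b = g) + of_bool (om a b) :: nat)" if "g = (True, t)"
  using that by (cases a; cases b; cases t) (auto simp: kadd_def om_def)

lemma quad_add:
  assumes "inZ Z" "inZ W"
  shows "even (Qc (symdiff Z W)) = (even (Qc Z) = even (Qc W))"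
proof -
  have "Qc (symdiff Z W) = (\<Sum>e\<in>E. (of_bool (kadd (kl Z e) (kl W e) = gam e) :: nat))"
    using finE by (simp add: Qc_def kl_symdiff Collect_conj_eq Int_commute)
  hence "even (Qc (symdiff Z W)) = even (\<Sum>e\<in>E. (of_bool (kl Z e = gam e) + of_bool (kl W e = gam e)
      + of_bool (om (kl Z e) (kl W e)) :: nat))"
  proof (simp only:, intro even_sum_cong ballI)
    fix e show "even (of_bool (kadd (kl Z e) (kl W e) = gam e) :: nat) =
       even (of_bool (kl Z e = gam e) + of_bool (kl W e = gam e) + of_bool (om (kl Z e) (kl W e)) :: nat)"
      by (rule quad_blk) (simp add: gam_def)
  qed
  also have "(\<Sum>e\<in>E. (of_bool (kl Z e = gam e) + of_bool (kl W e = gam e)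
      + of_bool (om (kl Z e) (kl W e)) :: nat)) = Qc Z + Qc W + card {e\<in>E. om (kl Z e) (kl W e)}"
    using finE by (simp add: sum.distrib Qc_def Collect_conj_eq Int_commute)
  finally show ?thesis using isotropy[OF assms] by simp
qed

lemma zero_blocks:
  assumes "inZ Z" "\<not> nz Z"
  shows "Z = {} \<or> Z = K"
proof (cases "Z = {}")
  case False
  have bc: "\<forall>c\<in>Z. \<forall>i j. (fst c,i,j) \<in> Z"
  proof (intro ballI allI)
    fix c i j assume c: "c \<in> Z"
    have e: "fst c \<in> E" using c assms(1) by (auto simp: inZ_def memK)
    have "kl Z (fst c) = kz" "evb Z (fst c)" using assms e by (auto simp: nz_def inZ_def)
    hence "\<forall>i j. ((fst c,i,j) \<in> Z) = ((fst c,False,False) \<in> Z)"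
      unfolding kl_def evb_def all_bool2 by auto
    moreover have "(fst c, fst (snd c), snd (snd c)) \<in> Z" using c by simp
    ultimately show "(fst c,i,j) \<in> Z" by blast
  qed
  show ?thesis using conn[OF _ False _ bc] assms(1) by (auto simp: inZ_def)
qed simp

lemma kl_K: "kl K e = kz" if "e \<in> E"
  using that by (simp add: kl_def memK)

lemma nz_iff: "inZ Z \<Longrightarrow> \<not> nz Z \<longleftrightarrow> Z = {} \<or> Z = K"
  using zero_blocks by (auto simp: nz_def kl_K)

lemma compat_closed:
  assumes "compat L Z" "\<forall>e\<in>E. L e \<noteq> kz" "c \<in> Z"
  shows "al c \<in> Z" "mstep L c \<in> Z"
proof -
  show "al c \<in> Z" using assms by (auto simp: compat_def inZ_def)
  obtain e i j where c: "c = (e,i,j)" by (cases c) auto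
  have e: "e \<in> E" using assms c by (auto simp: compat_def inZ_def memK)
  have "evb Z e \<and> (kl Z e = kz \<or> kl Z e = L e)" using assms e by (auto simp: compat_def inZ_def)
  hence "\<forall>i j. (e,i,j) \<in> Z \<longrightarrow> mstep L (e,i,j) \<in> Z"
    using block_closed_iff[of L e Z] assms(2) e by auto
  thus "mstep L c \<in> Z" using assms(3) c by auto
qed

lemma bR_sym: "sym (bR F)" by (auto simp: bR_def sym_def)

lemma bR_closed:
  assumes "compat (lam F) Z"
  shows "(bR F)\<^sup>* `` Z \<subseteq> Z"
proof -
  have "bR F `` Z \<subseteq> Z"
  proof
    fix d assume "d \<in> bR F `` Z"
    then obtain c where c: "c \<in> Z" "(c,d) \<in> bR F" by auto
    have dK: "d \<in> K" using c by (auto simp: bR_def)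
    have cl: "al c \<in> Z" "mstep (lam F) c \<in> Z" using compat_closed[OF assms _ c(1)] by auto
    from c(2) have "d = al c \<or> d = mstep (lam F) c \<or> c = al d \<or> c = mstep (lam F) d"
      by (auto simp: bR_def)
    thus "d \<in> Z" using cl ainv[OF dK] by auto
  qed
  thus ?thesis by (simp add: Image_closed_trancl)
qed

lemma rtr_sub: "R \<subseteq> A \<times> A \<Longrightarrow> a \<in> A \<Longrightarrow> R\<^sup>* `` {a} \<subseteq> A"
proof
  fix x assume "R \<subseteq> A \<times> A" "a \<in> A" "x \<in> R\<^sup>* `` {a}"
  hence "(a,x) \<in> R\<^sup>*" by simp
  thus "x \<in> A" using \<open>R \<subseteq> A \<times> A\<close> \<open>a \<in> A\<close> by (induction rule: rtrancl_induct) auto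
qed

lemma class_compat:
  assumes c: "c \<in> K"
  shows "compat (lam F) ((bR F)\<^sup>* `` {c})"
proof -
  let ?X = "(bR F)\<^sup>* `` {c}"
  have sub: "?X \<subseteq> K" by (rule rtr_sub) (auto simp: bR_def c)
  have al: "\<forall>x\<in>?X. al x \<in> ?X"
  proof
    fix x assume x: "x \<in> ?X"
    hence "x \<in> K" using sub by auto
    hence "(x, al x) \<in> bR F" using aK by (auto simp: bR_def)
    thus "al x \<in> ?X" using x by (auto intro: rtrancl_into_rtrancl)
  qed
  have ms: "\<forall>x\<in>?X. mstep (lam F) x \<in> ?X"
  proof
    fix x assume x: "x \<in> ?X"
    hence "x \<in> K" using sub by auto
    hence "(x, mstep (lam F) x) \<in> bR F" by (auto simp: bR_def memK)
    thus "mstep (lam F) x \<in> ?X" using x by (auto intro: rtrancl_into_rtrancl)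
  qed
  have "\<forall>e\<in>E. evb ?X e \<and> (kl ?X e = kz \<or> kl ?X e = lam F e)"
  proof
    fix e assume "e \<in> E"
    have "\<forall>i j. (e,i,j) \<in> ?X \<longrightarrow> mstep (lam F) (e,i,j) \<in> ?X" using ms by blast
    thus "evb ?X e \<and> (kl ?X e = kz \<or> kl ?X e = lam F e)"
      using block_closed_iff[of "lam F" e ?X] by simp
  qed
  thus ?thesis using sub al by (auto simp: compat_def inZ_def)
qed

lemma single_iff: "singleL (lam F) \<longleftrightarrow> card (K // (bR F)\<^sup>*) = 1"
proof
  assume s: "singleL (lam F)"
  obtain c0 where c0: "c0 \<in> K" using neE by (auto simp: memK)
  let ?S = "(bR F)\<^sup>*"
  have "compat (lam F) (?S``{c0})" by (rule class_compat[OF c0])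
  hence "?S``{c0} = {} \<or> ?S``{c0} = K" using s nz_iff by (auto simp: singleL_def compat_def)
  hence X: "?S``{c0} = K" by auto
  have "K // ?S = {K}"
  proof -
    have "?S``{d} = K" if d: "d \<in> K" for d
    proof -
      have "(c0,d) \<in> ?S" using X d by auto
      hence "?S``{d} = ?S``{c0}" using class_eq[OF sym_rtrancl[OF bR_sym] trans_rtrancl] by metis
      thus ?thesis using X by simp
    qed
    thus ?thesis using c0 by (auto simp: quotient_def)
  qed
  thus "card (K // ?S) = 1" by simp
next
  assume cd: "card (K // (bR F)\<^sup>*) = 1"
  show "singleL (lam F)" unfolding singleL_def
  proof (intro allI impI notI)
    fix Z assume Z: "compat (lam F) Z" and n: "nz Z"
    have Zne: "Z \<noteq> {}" using n by (auto simp: nz_def)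
    then obtain c where c: "c \<in> Z" by auto
    have ZK: "Z \<subseteq> K" using Z by (auto simp: compat_def inZ_def)
    have "K \<subseteq> Z"
    proof
      fix d assume d: "d \<in> K"
      have "(bR F)\<^sup>*``{c} \<in> K // (bR F)\<^sup>*" "(bR F)\<^sup>*``{d} \<in> K // (bR F)\<^sup>*"
        using c ZK d by (auto intro: quotientI)
      hence "(bR F)\<^sup>*``{d} = (bR F)\<^sup>*``{c}" using cd by (metis card_1_singletonE singletonD)
      hence "d \<in> (bR F)\<^sup>*``{c}" by auto
      thus "d \<in> Z" using bR_closed[OF Z] c by auto
    qed
    hence "Z = K" using ZK by auto
    thus False using n by (auto simp: nz_def kl_K)
  qed
qed

end


context cstr begin

lemma exist_E:
  assumes s: "singleL L" and Lnz: "\<forall>e\<in>E. L e \<noteq> kz" and v: "v \<in> E"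
  shows "\<exists>Z. inZ Z \<and> (\<forall>u\<in>E-{v}. kl Z u = kz \<or> kl Z u = L u) \<and> kl Z v \<noteq> kz \<and> kl Z v \<noteq> L v"
proof -
  define Ea where "Ea = (\<lambda>c. {c, al c}) ` K"
  define Em where "Em = (\<lambda>c. {c, mstep L c}) ` (K - blk v)"
  define Es where "Es = Ea \<union> Em"
  let ?G = "(relE Es)\<^sup>*"
  define p where "p = (v, False, False)"
  have pK: "p \<in> K" using v by (simp add: p_def memK)
  define X where "X = ?G `` {p}"
  have blkK: "blk v \<subseteq> K" using blk_sub[OF v] .
  have finEs: "finite Es" using finK by (simp add: Es_def Ea_def Em_def)
  have EsW: "\<forall>s\<in>Es. \<exists>a\<in>K. \<exists>b\<in>K. s = {a,b}"
    using aK by (auto simp: Es_def Ea_def Em_def memK)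
  have count: "card K \<le> card (K // ?G) + card Es"
    by (rule card_quot_relE[OF finK finEs EsW])
  have cEa: "2 * card Ea = card K"
    unfolding Ea_def by (rule card_pairs) (use finK aK ainv afp in auto)
  have cEm: "2 * card Em = card (K - blk v)"
    unfolding Em_def by (rule card_pairs) (use finK in \<open>auto simp: memK blk_mem mstep_neq\<close>)
  have cKv: "card (K - blk v) = card K - 4"
    using card_Diff_subset[OF finite_subset[OF blkK finK] blkK] card_blk[of v] by simp
  have K4: "card K \<ge> 4" using card_mono[OF finK blkK] card_blk[of v] by simp
  have cEs: "card Es \<le> card Ea + card Em" unfolding Es_def by (rule card_Un_le)
  have relsub: "relE Es \<subseteq> K \<times> K" using EsW by (auto simp: relE_def)
  have XK: "X \<subseteq> K" unfolding X_def by (rule rtr_sub[OF relsub pK])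
  have pX: "p \<in> X" by (simp add: X_def)
  have Xal: "\<forall>c\<in>X. al c \<in> X"
  proof
    fix c assume c: "c \<in> X"
    hence "c \<in> K" using XK by auto
    hence "{c, al c} \<in> Es" by (auto simp: Es_def Ea_def)
    hence "(c, al c) \<in> relE Es" by (auto simp: relE_def)
    thus "al c \<in> X" using c by (auto simp: X_def intro: rtrancl_into_rtrancl)
  qed
  have Xm: "\<forall>c\<in>X. fst c \<noteq> v \<longrightarrow> mstep L c \<in> X"
  proof (intro ballI impI)
    fix c assume c: "c \<in> X" "fst c \<noteq> v"
    hence "c \<in> K - blk v" using XK by (auto simp: blk_mem)
    hence "{c, mstep L c} \<in> Es" by (auto simp: Es_def Em_def)
    hence "(c, mstep L c) \<in> relE Es" by (auto simp: relE_def)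
    thus "mstep L c \<in> X" using c by (auto simp: X_def intro: rtrancl_into_rtrancl)
  qed
  have offv: "\<forall>u\<in>E-{v}. evb X u \<and> (kl X u = kz \<or> kl X u = L u)"
  proof
    fix u assume u: "u \<in> E - {v}"
    have "\<forall>i j. (u,i,j) \<in> X \<longrightarrow> mstep L (u,i,j) \<in> X" using Xm u by auto
    thus "evb X u \<and> (kl X u = kz \<or> kl X u = L u)"
      using block_closed_iff[of L u X] Lnz u by auto
  qed
  have evX: "even (card X)" by (rule even_alclosed[OF XK Xal])
  have "card X = (\<Sum>e\<in>E. card (X \<inter> blk e))" by (rule card_sum_blk[OF XK])
  also have "\<dots> = card (X \<inter> blk v) + (\<Sum>e\<in>E-{v}. card (X \<inter> blk e))"
    using finE v by (simp add: sum.remove)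
  finally have cX: "card X = card (X \<inter> blk v) + (\<Sum>e\<in>E-{v}. card (X \<inter> blk e))" .
  have "even (\<Sum>e\<in>E-{v}. card (X \<inter> blk e))"
    by (rule dvd_sum) (use offv in \<open>auto simp: even_blk_iff\<close>)
  hence "even (card (X \<inter> blk v))" using evX cX by simp
  hence evv: "evb X v" by (simp add: even_blk_iff)
  have inX: "inZ X" using XK Xal offv evv by (auto simp: inZ_def)
  show ?thesis
  proof (cases "kl X v \<noteq> kz \<and> kl X v \<noteq> L v")
    case True thus ?thesis using inX offv by blast
  next
    case False
    hence "compat L X" using inX offv v by (auto simp: compat_def)
    hence "\<not> nz X" using s by (auto simp: singleL_def)
    hence "X = K" using nz_iff[OF inX] pX by auto
    have symG: "sym ?G" by (rule sym_rtrancl) (auto simp: relE_def sym_def)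
    have "K // ?G = {K}"
    proof -
      have "?G``{d} = K" if d: "d \<in> K" for d
      proof -
        have "(p,d) \<in> ?G" using \<open>X = K\<close> d by (auto simp: X_def)
        hence "?G``{d} = ?G``{p}" using class_eq[OF symG trans_rtrancl] by metis
        thus ?thesis using \<open>X = K\<close> by (simp add: X_def)
      qed
      thus ?thesis using pK by (auto simp: quotient_def)
    qed
    hence "card K \<le> 1 + card Es" using count by simp
    thus ?thesis using cEa cEm cKv K4 cEs by linarith
  qed
qed

lemma exists_single: "\<exists>F\<subseteq>E. singleL (lam F)"
proof -
  have "\<forall>F. F \<subseteq> E \<longrightarrow> card {Z. compat (lam F) Z} = n \<longrightarrow> (\<exists>F'\<subseteq>E. singleL (lam F'))" for n
  proof (induction n rule: less_induct)
    case (less n)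
    show ?case
    proof (intro allI impI)
      fix F assume F: "F \<subseteq> E" and cn: "card {Z. compat (lam F) Z} = n"
      show "\<exists>F'\<subseteq>E. singleL (lam F')"
      proof (cases "singleL (lam F)")
        case True thus ?thesis using F by blast
      next
        case False
        then obtain Z where Z: "compat (lam F) Z" "nz Z" by (auto simp: singleL_def)
        then obtain v where v: "v \<in> E" "kl Z v \<noteq> kz" by (auto simp: nz_def)
        hence Zv: "kl Z v = lam F v" using Z by (auto simp: compat_def)
        define F' where "F' = symdiff F {v}"
        have F'E: "F' \<subseteq> E" using F v by (auto simp: F'_def symdiff_def)
        have vD: "v \<in> symdiff F F'" by (auto simp: F'_def symdiff_def)
        have lF': "e \<noteq> v \<Longrightarrow> lam F' e = lam F e" for e
          by (auto simp: F'_def lam_def symdiff_def)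
        have sub: "{W. compat (lam F') W} \<subset> {W. compat (lam F) W}"
        proof
          show "{W. compat (lam F') W} \<subseteq> {W. compat (lam F) W}"
          proof
            fix W assume W: "W \<in> {W. compat (lam F') W}"
            have iW: "inZ W" and iZ: "inZ Z" using W Z by (auto simp: compat_def)
            have "kl W v = kz"
            proof (rule ccontr)
              assume Wv: "kl W v \<noteq> kz"
              have "even (card {v})"
              proof (rule iso_set[OF iZ iW])
                show "{v} \<subseteq> E" using v by auto
                show "\<forall>e\<in>E. om (kl Z e) (kl W e) = (e \<in> {v})"
                proof
                  fix e assume e: "e \<in> E"
                  show "om (kl Z e) (kl W e) = (e \<in> {v})"
                  proof (cases "e = v")
                    case True
                    have "kl W v = lam F' v" using W Wv v by (auto simp: compat_def)
                    thus ?thesis using True Zv Wv om_diff[OF lam_diff[OF vD]] by simp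
                  next
                    case False
                    have "kl Z e \<in> {kz, lam F e}" "kl W e \<in> {kz, lam F e}"
                      using Z W e lF'[of e] False by (auto simp: compat_def)
                    thus ?thesis using om_same False by auto
                  qed
                qed
              qed
              thus False by simp
            qed
            thus "W \<in> {W. compat (lam F) W}"
              using W lF' by (auto simp: compat_def) (metis)
          qed
          have "Z \<notin> {W. compat (lam F') W}"
          proof
            assume "Z \<in> {W. compat (lam F') W}"
            hence "kl Z v = kz \<or> kl Z v = lam F' v" using v by (auto simp: compat_def)
            thus False using Zv lam_diff[OF vD] lam_nz[of F v] by auto
          qed
          thus "{W. compat (lam F') W} \<noteq> {W. compat (lam F) W}" using Z by auto
        qed
        have fin: "finite {W. compat (lam F) W}"
          by (rule finite_subset[of _ "Pow K"]) (auto simp: compat_def inZ_def finK)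
        have "card {W. compat (lam F') W} < n" using psubset_card_mono[OF fin sub] cn by simp
        thus ?thesis using less.IH F'E by blast
      qed
    qed
  qed
  thus ?thesis by blast
qed

end


context cstr begin

lemma compat_at: "compat L Z \<Longrightarrow> e \<in> E \<Longrightarrow> kl Z e \<in> {kz, L e}"
  by (auto simp: compat_def)

lemma compatI: "inZ Z \<Longrightarrow> (\<And>e. e \<in> E \<Longrightarrow> kl Z e \<in> {kz, L e}) \<Longrightarrow> compat L Z"
  by (auto simp: compat_def)

lemma kadd_tab:
  assumes "e \<in> symdiff F F'"
  shows "kadd (lam F e) (lam F' e) = gam e" "kadd (lam F' e) (lam F e) = gam e"
    "kadd (lam F e) (gam e) = lam F' e" "kadd (gam e) (lam F e) = lam F' e"
    "kadd (lam F' e) (gam e) = lam F e" "kadd (gam e) (lam F' e) = lam F e"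
  using assms by (auto simp: lam_def gam_def kadd_def symdiff_def)

lemma coset1: "e \<in> symdiff F F' \<Longrightarrow> a \<in> {kz, lam F' e} \<Longrightarrow> b \<in> {lam F e, gam e} \<Longrightarrow> kadd a b \<in> {lam F e, gam e}"
  by (auto simp: lam_def gam_def kadd_def symdiff_def)
lemma coset2: "e \<in> symdiff F F' \<Longrightarrow> a \<in> {lam F e, gam e} \<Longrightarrow> b \<in> {kz, lam F' e} \<Longrightarrow> kadd a b \<in> {lam F e, gam e}"
  by (auto simp: lam_def gam_def kadd_def symdiff_def)
lemma coset3: "e \<in> symdiff F F' \<Longrightarrow> b \<in> {lam F e, gam e} \<Longrightarrow> kadd (lam F e) b \<in> {kz, lam F' e}"
  by (auto simp: lam_def gam_def kadd_def symdiff_def)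

lemma gam_nz'[simp]: "kz \<noteq> gam e" by (simp add: gam_def)

lemma single_nz: "singleL L \<Longrightarrow> compat L Z \<Longrightarrow> \<not> nz Z"
  by (auto simp: singleL_def)

lemma not_nz: "\<not> nz Z \<Longrightarrow> e \<in> E \<Longrightarrow> kl Z e = kz"
  by (auto simp: nz_def)

lemma claimA:
  assumes sF: "singleL (lam F)" and z: "compat (lam (symdiff F {x})) z" and zx: "kl z x = lam F' x"
    and x: "x \<in> E" "x \<in> symdiff F F'" and y: "y \<in> E" "y \<in> symdiff F F'" "y \<noteq> x" and zy: "kl z y \<noteq> kz"
  shows "singleL (lam (symdiff F {x,y}))"
proof (unfold singleL_def, intro allI impI notI)
  fix w assume w: "compat (lam (symdiff F {x,y})) w" and nw: "nz w"
  have lz: "lam (symdiff F {x}) e = (if e = x then lam F' e else lam F e)" for e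
    using lam_tog[of "{x}" F F' e] x by auto
  have lw: "lam (symdiff F {x,y}) e = (if e = x \<or> e = y then lam F' e else lam F e)" for e
    using lam_tog[of "{x,y}" F F' e] x y by auto
  have iz: "inZ z" and iw: "inZ w" using z w by (auto simp: compat_def)
  have zy': "kl z y = lam F y" using compat_at[OF z y(1)] zy lz y(3) by auto
  have wy: "kl w y = kz"
  proof (rule ccontr)
    assume wy: "kl w y \<noteq> kz"
    have "even (card {y})"
    proof (rule iso_set[OF iz iw])
      show "{y} \<subseteq> E" using y by auto
      show "\<forall>e\<in>E. om (kl z e) (kl w e) = (e \<in> {y})"
      proof
        fix e assume e: "e \<in> E"
        have ze: "kl z e \<in> {kz, lam (symdiff F {x}) e}" using compat_at[OF z e] .
        have we: "kl w e \<in> {kz, lam (symdiff F {x,y}) e}" using compat_at[OF w e] .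
        consider "e = x" | "e = y" | "e \<noteq> x" "e \<noteq> y" by blast
        then show "om (kl z e) (kl w e) = (e \<in> {y})"
        proof cases
          case 1 thus ?thesis using ze we lz lw om_same[of "kl z e" "lam F' x" "kl w e"] y(3) by auto
        next
          case 2
          have "kl w e = lam F' e" using we wy lw 2 by auto
          thus ?thesis using 2 zy' om_diff[OF lam_diff[OF y(2)]] by simp
        next
          case 3 thus ?thesis using ze we lz lw om_same[of "kl z e" "lam F e" "kl w e"] by auto
        qed
      qed
    qed
    thus False by simp
  qed
  show False
  proof (cases "kl w x = kz")
    case True
    have "compat (lam F) w"
    proof (rule compatI[OF iw])
      fix e assume e: "e \<in> E"
      show "kl w e \<in> {kz, lam F e}"
      proof (cases "e = x \<or> e = y")
        case True thus ?thesis using \<open>kl w x = kz\<close> wy by auto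
      next
        case False thus ?thesis using compat_at[OF w e] lw[of e] by auto
      qed
    qed
    thus False using sF nw by (auto simp: singleL_def)
  next
    case False
    hence wx: "kl w x = lam F' x" using compat_at[OF w x(1)] lw by auto
    let ?u = "symdiff w z"
    have "compat (lam F) ?u"
    proof (rule compatI[OF inZ_symdiff[OF iw iz]])
      fix e assume e: "e \<in> E"
      show "kl ?u e \<in> {kz, lam F e}"
      proof (cases "e = x \<or> e = y")
        case True thus ?thesis using wx zx wy zy' by (auto simp: kl_symdiff)
      next
        case False
        thus ?thesis using compat_at[OF w e] compat_at[OF z e] lw lz kadd_line
          by (auto simp: kl_symdiff)
      qed
    qed
    hence "kl ?u y = kz" using sF y(1) by (auto simp: singleL_def nz_def)
    thus False using wy zy' by (simp add: kl_symdiff)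
  qed
qed

end


context cstr begin

lemma core:
  assumes sF: "singleL (lam F)" and sF': "singleL (lam F')"
    and x: "x \<in> E" "x \<in> symdiff F F'" and nsx: "\<not> singleL (lam (symdiff F {x}))"
  shows "\<exists>y. y \<in> E \<and> y \<in> symdiff F F' \<and> singleL (lam (symdiff F {x,y})) \<and> singleL (lam (symdiff F' {x,y}))"
proof -
  let ?D = "symdiff F F'"
  have D': "symdiff F' F = ?D" by (rule symdiff_comm)
  have x': "x \<in> symdiff F' F" using x D' by simp
  have lx: "lam (symdiff F {x}) e = (if e = x then lam F' e else lam F e)" for e
    using lam_tog[of "{x}" F F' e] x by auto
  have lx': "lam (symdiff F' {x}) e = (if e = x then lam F e else lam F' e)" for e
    using lam_tog[of "{x}" F' F e] x' by auto
  from nsx obtain z where z: "compat (lam (symdiff F {x})) z" "nz z" by (auto simp: singleL_def)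
  have iz: "inZ z" using z by (simp add: compat_def)
  have zx: "kl z x = lam F' x"
  proof (rule ccontr)
    assume "kl z x \<noteq> lam F' x"
    hence zx0: "kl z x = kz" using compat_at[OF z(1) x(1)] lx[of x] by auto
    have "compat (lam F) z"
    proof (rule compatI[OF iz])
      fix e assume e: "e \<in> E"
      show "kl z e \<in> {kz, lam F e}" using zx0 compat_at[OF z(1) e] lx[of e] by (cases "e = x") auto
    qed
    thus False using sF z(2) by (auto simp: singleL_def)
  qed
  define Y where "Y = {y \<in> E. y \<in> ?D \<and> y \<noteq> x \<and> kl z y \<noteq> kz}"
  have YD: "Y \<subseteq> ?D" "Y \<subseteq> E" "x \<notin> Y" by (auto simp: Y_def)
  have Yz: "y \<in> Y \<Longrightarrow> kl z y = lam F y" for y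
    using compat_at[OF z(1), of y] lx[of y] by (auto simp: Y_def)
  have zoff: "e \<in> E \<Longrightarrow> e \<in> ?D \<Longrightarrow> e \<noteq> x \<Longrightarrow> e \<notin> Y \<Longrightarrow> kl z e = kz" for e
    by (auto simp: Y_def)
  have zin: "e \<in> E \<Longrightarrow> e \<noteq> x \<Longrightarrow> kl z e \<in> {kz, lam F e}" for e
    using compat_at[OF z(1), of e] lx[of e] by auto
  have zout: "e \<in> E \<Longrightarrow> e \<notin> ?D \<Longrightarrow> kl z e \<in> {kz, lam F' e}" for e
    using zin[of e] lam_same[of e F F'] x by auto
  have A: "y \<in> Y \<Longrightarrow> singleL (lam (symdiff F {x,y}))" for y
    using claimA[OF sF z(1) zx x] by (auto simp: Y_def)
  have finY: "finite Y" using finE by (auto simp: Y_def)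
  show ?thesis
  proof (cases "singleL (lam (symdiff F' {x}))")
    case False
    from False obtain g where g: "compat (lam (symdiff F' {x})) g" "nz g" by (auto simp: singleL_def)
    have ig: "inZ g" using g by (simp add: compat_def)
    have gx: "kl g x = lam F x"
    proof (rule ccontr)
      assume "kl g x \<noteq> lam F x"
      hence gx0: "kl g x = kz" using compat_at[OF g(1) x(1)] lx'[of x] by auto
      have "compat (lam F') g"
      proof (rule compatI[OF ig])
        fix e assume e: "e \<in> E"
        show "kl g e \<in> {kz, lam F' e}" using gx0 compat_at[OF g(1) e] lx'[of e] by (cases "e = x") auto
      qed
      thus False using sF' g(2) by (auto simp: singleL_def)
    qed
    have gin: "e \<in> E \<Longrightarrow> e \<noteq> x \<Longrightarrow> kl g e \<in> {kz, lam F' e}" for e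
      using compat_at[OF g(1), of e] lx'[of e] by auto
    define Y' where "Y' = {y \<in> E. y \<in> ?D \<and> y \<noteq> x \<and> kl g y \<noteq> kz}"
    have A': "y \<in> Y' \<Longrightarrow> singleL (lam (symdiff F' {x,y}))" for y
      using claimA[OF sF' g(1) gx x(1) x'] D' by (auto simp: Y'_def)
    have "even (card (insert x (Y \<inter> Y')))"
    proof (rule iso_set[OF iz ig])
      show "insert x (Y \<inter> Y') \<subseteq> E" using x YD by auto
      show "\<forall>e\<in>E. om (kl z e) (kl g e) = (e \<in> insert x (Y \<inter> Y'))"
      proof
        fix e assume e: "e \<in> E"
        show "om (kl z e) (kl g e) = (e \<in> insert x (Y \<inter> Y'))"
        proof (cases "e = x")
          case True
          thus ?thesis using zx gx om_diff[OF lam_diff[OF x'], of "lam F' x" "lam F x"] by simp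
        next
          case ex: False
          show ?thesis
          proof (cases "e \<in> ?D")
            case True
            have "om (kl z e) (kl g e) = (kl z e \<noteq> kz \<and> kl g e \<noteq> kz)"
              using om_diff[OF lam_diff[OF True]] zin[OF e ex] gin[OF e ex] by simp
            thus ?thesis using ex e True by (auto simp: Y_def Y'_def)
          next
            case False
            have "\<not> om (kl z e) (kl g e)"
              using om_same zin[OF e ex] gin[OF e ex] lam_same[OF False] by metis
            thus ?thesis using ex False by (auto simp: Y_def Y'_def)
          qed
        qed
      qed
    qed
    moreover have "x \<notin> Y \<inter> Y'" using YD by auto
    moreover have "finite (Y \<inter> Y')" using finY by auto
    ultimately have "odd (card (Y \<inter> Y'))" by simp
    then obtain y where "y \<in> Y \<inter> Y'" by (metis card.empty even_zero ex_in_conv)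
    thus ?thesis using A A' by (auto simp: Y_def)
  next
    case True
    obtain g where g: "inZ g" "\<forall>u\<in>E-{x}. kl g u = kz \<or> kl g u = lam F' u" "kl g x \<noteq> kz" "kl g x \<noteq> lam F' x"
      using exist_E[OF sF' _ x(1)] by auto
    have gx: "kl g x = gam x"
    proof (rule ccontr)
      assume "kl g x \<noteq> gam x"
      hence gxl: "kl g x = lam F x" using lam_other[OF x' g(3) g(4)] by auto
      have "compat (lam (symdiff F' {x})) g"
      proof (rule compatI[OF g(1)])
        fix e assume e: "e \<in> E"
        show "kl g e \<in> {kz, lam (symdiff F' {x}) e}" using g(2) e gxl lx'[of e] by (cases "e = x") auto
      qed
      moreover have "nz g" using g(3) x(1) by (auto simp: nz_def)
      ultimately show False using True by (auto simp: singleL_def)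
    qed
    have gin: "e \<in> E \<Longrightarrow> e \<noteq> x \<Longrightarrow> kl g e \<in> {kz, lam F' e}" for e
      using g(2) by auto
    have "\<forall>y\<in>Y. \<exists>h. inZ h \<and> (\<forall>u\<in>E-{y}. kl h u = kz \<or> kl h u = lam F' u) \<and> kl h y \<noteq> kz \<and> kl h y \<noteq> lam F' y"
      using exist_E[OF sF'] YD by auto
    then obtain h where h: "\<And>y. y \<in> Y \<Longrightarrow> inZ (h y) \<and> (\<forall>u\<in>E-{y}. kl (h y) u = kz \<or> kl (h y) u = lam F' u)
        \<and> kl (h y) y \<noteq> kz \<and> kl (h y) y \<noteq> lam F' y"
      by metis
    have hy: "y \<in> Y \<Longrightarrow> kl (h y) y = lam F y \<or> kl (h y) y = gam y" for y
    proof -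
      assume yY: "y \<in> Y"
      hence "y \<in> symdiff F' F" using YD D' by auto
      thus ?thesis using lam_other[of y F' F "kl (h y) y"] h[OF yY] by auto
    qed
    have hin: "y \<in> Y \<Longrightarrow> e \<in> E \<Longrightarrow> e \<noteq> y \<Longrightarrow> kl (h y) e \<in> {kz, lam F' e}" for y e
      using h[of y] by auto
    define G1 where "G1 = {y\<in>Y. kl g y \<noteq> kz}"
    define H1 where "H1 = {y\<in>Y. kl (h y) y = gam y}"
    have P1: "odd (card G1)"
    proof -
      have "even (card (insert x G1))"
      proof (rule iso_set[OF iz g(1)])
        show "insert x G1 \<subseteq> E" using x YD by (auto simp: G1_def)
        show "\<forall>e\<in>E. om (kl z e) (kl g e) = (e \<in> insert x G1)"
        proof
          fix e assume e: "e \<in> E"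
          show "om (kl z e) (kl g e) = (e \<in> insert x G1)"
          proof (cases "e = x")
            case True
            thus ?thesis using zx gx om_diff[of "lam F' x" "gam x" "lam F' x" "gam x"] by simp
          next
            case ex: False
            show ?thesis
            proof (cases "e \<in> ?D")
              case True
              have "om (kl z e) (kl g e) = (kl z e \<noteq> kz \<and> kl g e \<noteq> kz)"
                using om_diff[OF lam_diff[OF True]] zin[OF e ex] gin[OF e ex] by simp
              thus ?thesis using ex e True by (auto simp: Y_def G1_def)
            next
              case False
              have "\<not> om (kl z e) (kl g e)"
                using om_same zin[OF e ex] gin[OF e ex] lam_same[OF False] by metis
              thus ?thesis using ex False by (auto simp: Y_def G1_def)
            qed
          qed
        qed
      qed
      moreover have "x \<notin> G1" using YD by (auto simp: G1_def)
      moreover have "finite G1" using finY by (auto simp: G1_def)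
      ultimately show ?thesis by simp
    qed
    have P2: "even (card H1)"
    proof -
      have ind: "\<exists>s. inZ s \<and> (\<forall>e\<in>E. (e \<in> Y0 \<longrightarrow> kl s e = lam F e \<or> kl s e = gam e) \<and>
                     (e \<notin> Y0 \<longrightarrow> kl s e = kz \<or> kl s e = lam F' e)) \<and>
                 even (Qc s) = even (card {y\<in>Y0. kl (h y) y = gam y})"
        if "Y0 \<subseteq> Y" for Y0
        using finite_subset[OF that finY] that
      proof (induction Y0 rule: finite_induct)
        case empty
        have "{e\<in>E. kz = gam e} = {}" by (auto simp: gam_def)
        hence "Qc {} = 0" unfolding Qc_def kl_empty by (simp only: card.empty)
        thus ?case using inZ_empty by (intro exI[of _ "{}"]) auto
      next
        case (insert y Y0)
        then obtain s where s: "inZ s" "\<forall>e\<in>E. (e \<in> Y0 \<longrightarrow> kl s e = lam F e \<or> kl s e = gam e) \<and>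
                     (e \<notin> Y0 \<longrightarrow> kl s e = kz \<or> kl s e = lam F' e)"
            "even (Qc s) = even (card {y\<in>Y0. kl (h y) y = gam y})" by auto
        have yY: "y \<in> Y" using insert by auto
        have yD: "y \<in> ?D" "y \<in> E" using yY YD by auto
        have ih: "inZ (h y)" using h[OF yY] by auto
        let ?s = "symdiff s (h y)"
        have cl: "\<forall>e\<in>E. (e \<in> insert y Y0 \<longrightarrow> kl ?s e = lam F e \<or> kl ?s e = gam e) \<and>
                     (e \<notin> insert y Y0 \<longrightarrow> kl ?s e = kz \<or> kl ?s e = lam F' e)"
        proof
          fix e assume e: "e \<in> E"
          show "(e \<in> insert y Y0 \<longrightarrow> kl ?s e = lam F e \<or> kl ?s e = gam e) \<and>
                     (e \<notin> insert y Y0 \<longrightarrow> kl ?s e = kz \<or> kl ?s e = lam F' e)"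
          proof (cases "e = y")
            case True
            have "kl s y \<in> {kz, lam F' y}" using s(2) insert.hyps(2) yD by auto
            moreover have "kl (h y) y \<in> {lam F y, gam y}" using hy[OF yY] by auto
            ultimately have "kl ?s y \<in> {lam F y, gam y}"
              unfolding kl_symdiff by (rule coset1[OF yD(1)])
            thus ?thesis using True by auto
          next
            case ney: False
            have he: "kl (h y) e \<in> {kz, lam F' e}" using hin[OF yY e ney] .
            show ?thesis
            proof (cases "e \<in> Y0")
              case True
              have eD: "e \<in> ?D" using True insert.prems YD by auto
              have "kl s e \<in> {lam F e, gam e}" using s(2) e True by auto
              hence "kl ?s e \<in> {lam F e, gam e}"
                unfolding kl_symdiff using he by (rule coset2[OF eD])
              thus ?thesis using True by auto
            next
              case False
              have "kl s e \<in> {kz, lam F' e}" using s(2) e False by auto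
              hence "kl ?s e \<in> {kz, lam F' e}"
                unfolding kl_symdiff using he by (rule kadd_line)
              thus ?thesis using False ney by auto
            qed
          qed
        qed
        have Qh: "Qc (h y) = (if kl (h y) y = gam y then 1 else 0)"
        proof -
          have "{e\<in>E. kl (h y) e = gam e} = (if kl (h y) y = gam y then {y} else {})"
          proof (intro set_eqI iffI)
            fix e assume "e \<in> {e\<in>E. kl (h y) e = gam e}"
            hence e: "e \<in> E" "kl (h y) e = gam e" by auto
            have "e = y"
            proof (rule ccontr)
              assume "e \<noteq> y"
              hence "kl (h y) e \<in> {kz, lam F' e}" using hin[OF yY e(1)] by auto
              thus False using e(2) by auto
            qed
            thus "e \<in> (if kl (h y) y = gam y then {y} else {})" using e by auto
          next
            fix e assume "e \<in> (if kl (h y) y = gam y then {y} else {})"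
            thus "e \<in> {e\<in>E. kl (h y) e = gam e}" using yD by (auto split: if_splits)
          qed
          thus ?thesis by (simp add: Qc_def)
        qed
        have cnt: "card {y'\<in>insert y Y0. kl (h y') y' = gam y'} =
            (if kl (h y) y = gam y then 1 else 0) + card {y'\<in>Y0. kl (h y') y' = gam y'}"
        proof -
          have fin: "finite {y'\<in>Y0. kl (h y') y' = gam y'}" using insert.hyps(1) by simp
          have ny: "y \<notin> {y'\<in>Y0. kl (h y') y' = gam y'}" using insert.hyps(2) by simp
          show ?thesis
          proof (cases "kl (h y) y = gam y")
            case True
            hence "{y'\<in>insert y Y0. kl (h y') y' = gam y'} = insert y {y'\<in>Y0. kl (h y') y' = gam y'}"
              by auto
            thus ?thesis using card_insert_disjoint[OF fin ny] True by simp
          next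
            case False
            hence "{y'\<in>insert y Y0. kl (h y') y' = gam y'} = {y'\<in>Y0. kl (h y') y' = gam y'}"
              by auto
            thus ?thesis using False by simp
          qed
        qed
        have "even (Qc ?s) = even (card {y'\<in>insert y Y0. kl (h y') y' = gam y'})"
          using quad_add[OF s(1) ih] s(3) Qh cnt by auto
        thus ?case using inZ_symdiff[OF s(1) ih] cl by (intro exI[of _ "?s"]) simp
      qed
      obtain s where s: "inZ s" "\<forall>e\<in>E. (e \<in> Y \<longrightarrow> kl s e = lam F e \<or> kl s e = gam e) \<and>
                     (e \<notin> Y \<longrightarrow> kl s e = kz \<or> kl s e = lam F' e)"
            "even (Qc s) = even (card {y\<in>Y. kl (h y) y = gam y})"
        using ind[OF subset_refl] by blast
      have "compat (lam F') (symdiff z s)"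
      proof (rule compatI[OF inZ_symdiff[OF iz s(1)]])
        fix e assume e: "e \<in> E"
        show "kl (symdiff z s) e \<in> {kz, lam F' e}"
        proof (cases "e \<in> Y")
          case True
          have eD: "e \<in> ?D" using True YD by auto
          have "kl s e \<in> {lam F e, gam e}" using s(2) e True by auto
          thus ?thesis unfolding kl_symdiff Yz[OF True] by (rule coset3[OF eD])
        next
          case False
          have "kl z e \<in> {kz, lam F' e}"
          proof (cases "e = x")
            case True thus ?thesis using zx by simp
          next
            case nx: False
            thus ?thesis using zoff[OF e _ nx False] zout[OF e] by (cases "e \<in> ?D") auto
          qed
          moreover have "kl s e \<in> {kz, lam F' e}" using s(2) e False by auto
          ultimately show ?thesis unfolding kl_symdiff by (rule kadd_line)
        qed
      qed
      hence "\<not> nz (symdiff z s)" using sF' by (auto simp: singleL_def)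
      hence eqs: "\<forall>e\<in>E. kl s e = kl z e" by (auto simp: nz_def kl_symdiff kadd_eq_kz)
      have "{e\<in>E. kl s e = gam e} = {e\<in>E. kl z e = gam e}" using eqs by auto
      hence "Qc s = Qc z" unfolding Qc_def by simp
      moreover have "Qc z = 0"
      proof -
        have "\<forall>e\<in>E. kl z e \<noteq> gam e"
        proof
          fix e assume e: "e \<in> E"
          have "kl z e \<in> {kz, lam (symdiff F {x}) e}" by (rule compat_at[OF z(1) e])
          thus "kl z e \<noteq> gam e" by auto
        qed
        hence "{e\<in>E. kl z e = gam e} = {}" by auto
        thus ?thesis unfolding Qc_def by (simp only: card.empty)
      qed
      ultimately show ?thesis using s(3) by (simp add: H1_def)
    qed
    have "G1 \<noteq> H1" using P1 P2 by auto
    then obtain y where yY: "y \<in> Y" and yne: "(kl g y \<noteq> kz) \<noteq> (kl (h y) y = gam y)"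
      unfolding G1_def H1_def by blast
    have yE: "y \<in> E" "y \<in> ?D" "y \<noteq> x" using yY YD by auto
    have "singleL (lam (symdiff F' {x,y}))"
    proof (unfold singleL_def, intro allI impI notI)
      fix w assume w: "compat (lam (symdiff F' {x,y})) w" and nw: "nz w"
      have lw: "lam (symdiff F' {x,y}) e = (if e = x \<or> e = y then lam F e else lam F' e)" for e
        using lam_tog[of "{x,y}" F' F e] x' yE D' by auto
      have iw: "inZ w" using w by (simp add: compat_def)
      have win: "e \<in> E \<Longrightarrow> kl w e \<in> {kz, (if e = x \<or> e = y then lam F e else lam F' e)}" for e
        using compat_at[OF w, of e] lw[of e] by simp
      have wy: "kl w y = lam F y"
      proof (rule ccontr)
        assume "kl w y \<noteq> lam F y"
        hence wy0: "kl w y = kz" using win[OF yE(1)] by auto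
        have "compat (lam (symdiff F' {x})) w"
        proof (rule compatI[OF iw])
          fix e assume e: "e \<in> E"
          show "kl w e \<in> {kz, lam (symdiff F' {x}) e}"
            using win[OF e] wy0 lx'[of e] by (cases "e = y") auto
        qed
        thus False using True nw by (auto simp: singleL_def)
      qed
      have hyy: "kl (h y) y = lam F y \<or> kl (h y) y = gam y" using hy[OF yY] .
      have gw: "(kl w x \<noteq> kz) = (kl g y \<noteq> kz)"
      proof -
        define S where "S = (if kl w x \<noteq> kz then {x} else {}) \<union> (if kl g y \<noteq> kz then {y} else {})"
        have "even (card S)"
        proof (rule iso_set[OF g(1) iw])
          show "S \<subseteq> E" using x yE by (auto simp: S_def)
          show "\<forall>e\<in>E. om (kl g e) (kl w e) = (e \<in> S)"
          proof
            fix e assume e: "e \<in> E"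
            consider "e = x" | "e = y" | "e \<noteq> x" "e \<noteq> y" by blast
            then show "om (kl g e) (kl w e) = (e \<in> S)"
            proof cases
              case 1
              have "om (kl g e) (kl w e) = (kl w x \<noteq> kz)"
                using 1 gx win[OF e] om_diff[of "gam x" "lam F x" "gam x" "kl w x"] by simp
              thus ?thesis using 1 yE by (auto simp: S_def)
            next
              case 2
              have "om (kl g e) (kl w e) = (kl g y \<noteq> kz)"
                using 2 wy gin[OF e] yE om_diff[OF lam_diff[OF x'[folded D', unfolded D'] ], of "kl g y" "lam F y"]
                  om_diff[of "lam F' y" "lam F y" "kl g y" "lam F y"] lam_diff[OF yE(2)] by auto
              thus ?thesis using 2 yE by (auto simp: S_def)
            next
              case 3
              have "\<not> om (kl g e) (kl w e)"
                using om_same[of "kl g e" "lam F' e" "kl w e"] gin[OF e 3(1)] win[OF e] 3 by auto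
              thus ?thesis using 3 by (auto simp: S_def)
            qed
          qed
        qed
        thus ?thesis using yE by (auto simp: S_def split: if_splits)
      qed
      have hw: "(kl (h y) y = gam y) = (kl (h y) x \<noteq> kz \<and> kl w x \<noteq> kz)"
      proof -
        define S where "S = (if kl (h y) y = gam y then {y} else {}) \<union>
            (if kl (h y) x \<noteq> kz \<and> kl w x \<noteq> kz then {x} else {})"
        have "even (card S)"
        proof (rule iso_set[OF conjunct1[OF h[OF yY]] iw])
          show "S \<subseteq> E" using x yE by (auto simp: S_def)
          show "\<forall>e\<in>E. om (kl (h y) e) (kl w e) = (e \<in> S)"
          proof
            fix e assume e: "e \<in> E"
            consider "e = y" | "e = x" | "e \<noteq> x" "e \<noteq> y" by blast
            then show "om (kl (h y) e) (kl w e) = (e \<in> S)"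
            proof cases
              case 1
              have "om (kl (h y) e) (kl w e) = (kl (h y) y = gam y)"
              proof (cases "kl (h y) y = gam y")
                case True
                thus ?thesis using 1 wy om_diff[of "gam y" "lam F y" "gam y" "lam F y"] by simp
              next
                case False
                thus ?thesis using 1 wy hyy om_same[of "lam F y" "lam F y" "lam F y"] by simp
              qed
              thus ?thesis using 1 yE by (auto simp: S_def)
            next
              case 2
              have "om (kl (h y) e) (kl w e) = (kl (h y) x \<noteq> kz \<and> kl w x \<noteq> kz)"
                using 2 hin[OF yY e] yE win[OF e] om_diff[of "lam F' x" "lam F x" "kl (h y) x" "kl w x"]
                  lam_diff[OF x'] by auto
              thus ?thesis using 2 yE by (auto simp: S_def)
            next
              case 3
              have "\<not> om (kl (h y) e) (kl w e)"
                using om_same[of "kl (h y) e" "lam F' e" "kl w e"] hin[OF yY e 3(2)] win[OF e] 3 by auto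
              thus ?thesis using 3 by (auto simp: S_def)
            qed
          qed
        qed
        thus ?thesis using yE by (auto simp: S_def split: if_splits)
      qed
      show False
      proof (cases "kl g y \<noteq> kz")
        case True
        hence hgy: "kl (h y) y \<noteq> gam y" using yne by auto
        hence hyl: "kl (h y) y = lam F y" using hyy by auto
        have wx: "kl w x \<noteq> kz" using gw True by auto
        hence hx: "kl (h y) x = kz" using hw hgy by auto
        let ?u = "symdiff w (h y)"
        have "compat (lam (symdiff F' {x})) ?u"
        proof (rule compatI[OF inZ_symdiff[OF iw conjunct1[OF h[OF yY]]]])
          fix e assume e: "e \<in> E"
          show "kl ?u e \<in> {kz, lam (symdiff F' {x}) e}"
          proof (cases "e = x \<or> e = y")
            case True
            thus ?thesis using hx hyl wy win[OF e] lx'[of e] yE by (auto simp: kl_symdiff)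
          next
            case False
            thus ?thesis using win[OF e] hin[OF yY e] lx'[of e] kadd_line[of "kl w e" "lam F' e" "kl (h y) e"]
              by (auto simp: kl_symdiff)
          qed
        qed
        hence "kl ?u x = kz" using \<open>singleL (lam (symdiff F' {x}))\<close> x(1) by (auto simp: singleL_def nz_def)
        thus False using wx hx by (simp add: kl_symdiff)
      next
        case False
        hence "kl (h y) y = gam y" using yne by auto
        moreover have "kl w x = kz" using gw False by auto
        ultimately show False using hw by simp
      qed
    qed
    thus ?thesis using A[OF yY] yE by blast
  qed
qed

end


context cstr begin

lemma strong:
  assumes "singleL (lam F)" "singleL (lam F')" "x \<in> E" "x \<in> symdiff F F'"
  shows "\<exists>y. y \<in> E \<and> y \<in> symdiff F F' \<and> singleL (lam (symdiff F {x,y})) \<and> singleL (lam (symdiff F' {x,y}))"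
proof (cases "singleL (lam (symdiff F {x})) \<and> singleL (lam (symdiff F' {x}))")
  case True thus ?thesis using assms by (intro exI[of _ x]) auto
next
  case nb: False
  show ?thesis
  proof (cases "singleL (lam (symdiff F {x}))")
    case False thus ?thesis using core assms by blast
  next
    case True
    hence ns: "\<not> singleL (lam (symdiff F' {x}))" using nb by auto
    have x': "x \<in> symdiff F' F" using assms(4) symdiff_comm by metis
    from core[OF assms(2) assms(1) assms(3) x' ns] obtain y where
      "y \<in> E" "y \<in> symdiff F' F" "singleL (lam (symdiff F' {x,y}))" "singleL (lam (symdiff F {x,y}))"
      by blast
    thus ?thesis using symdiff_comm by metis
  qed
qed

end

abbreviation "areach G \<equiv> (adj_rel G)\<^sup>*"

lemma adj_sym: "sym (adj_rel G)"
proof (rule symI)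
  fix a b assume "(a,b) \<in> adj_rel G"
  then obtain e i where "e \<in> redges G" "a = rinc G e i" "b = rinc G e (\<not> i)" by (auto simp: adj_rel_def)
  moreover have "rinc G e i = rinc G e (\<not> \<not> i)" by simp
  ultimately show "(b,a) \<in> adj_rel G" unfolding adj_rel_def by blast
qed

lemma rtr_sub': "R \<subseteq> A \<times> A \<Longrightarrow> a \<in> A \<Longrightarrow> R\<^sup>* `` {a} \<subseteq> A"
proof
  fix x assume "R \<subseteq> A \<times> A" "a \<in> A" "x \<in> R\<^sup>* `` {a}"
  hence "(a,x) \<in> R\<^sup>*" by simp
  thus "x \<in> A" using \<open>R \<subseteq> A \<times> A\<close> \<open>a \<in> A\<close> by (induction rule: rtrancl_induct) auto
qed

lemma adj_sub: "ribbon_graph G \<Longrightarrow> adj_rel G \<subseteq> rverts G \<times> rverts G"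
  unfolding adj_rel_def ribbon_graph_def by auto

lemma comp_class: "C \<in> components G \<Longrightarrow> \<exists>v0\<in>rverts G. C = areach G `` {v0}"
  unfolding components_def by (auto elim: quotientE)

lemma comp_same:
  assumes "C \<in> components G" "u \<in> C"
  shows "C = areach G `` {u}"
proof -
  obtain v0 where v0: "v0 \<in> rverts G" "C = areach G `` {v0}" using comp_class[OF assms(1)] by auto
  have "(v0,u) \<in> areach G" using assms(2) v0 by auto
  thus ?thesis using v0 class_eq[OF sym_rtrancl[OF adj_sym] trans_rtrancl] by metis
qed

lemma comp_closed: "C \<in> components G \<Longrightarrow> u \<in> C \<Longrightarrow> (u,w) \<in> areach G \<Longrightarrow> w \<in> C"
  using comp_same by (metis Image_singleton_iff)

lemma comp_sub: "ribbon_graph G \<Longrightarrow> C \<in> components G \<Longrightarrow> C \<subseteq> rverts G"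
  using comp_class rtr_sub'[OF adj_sub] by metis

lemma edge_both:
  assumes "C \<in> components G" "e \<in> redges G" "rinc G e i \<in> C"
  shows "rinc G e j \<in> C"
proof (cases "j = i")
  case True thus ?thesis using assms by simp
next
  case False
  hence "j = (\<not> i)" by auto
  have "(rinc G e i, rinc G e (\<not> i)) \<in> adj_rel G" using assms(2) by (auto simp: adj_rel_def)
  thus ?thesis using comp_closed[OF assms(1,3)] \<open>j = (\<not> i)\<close> by auto
qed

lemma edges_at_sub: "edges_at G C \<subseteq> redges G" by (auto simp: edges_at_def)

lemma edges_at_rinc:
  assumes "C \<in> components G" "e \<in> edges_at G C"
  shows "rinc G e i \<in> C"
proof -
  have e: "e \<in> redges G" "rinc G e False \<in> C \<or> rinc G e True \<in> C" using assms(2) by (auto simp: edges_at_def)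
  thus ?thesis using edge_both[OF assms(1) e(1)] by metis
qed

lemma cvert_in: "C \<in> components G \<Longrightarrow> c \<in> corners_of (edges_at G C) \<Longrightarrow> cvert G c \<in> C"
  by (cases c) (auto simp: corners_of_def cvert_def intro: edges_at_rinc)

lemma edges_at_disj:
  assumes "C1 \<in> components G" "C2 \<in> components G" "e \<in> edges_at G C1" "e \<in> edges_at G C2"
  shows "C1 = C2"
proof -
  have "rinc G e False \<in> C1" "rinc G e False \<in> C2" using edges_at_rinc assms by metis+
  thus ?thesis using comp_same assms(1,2) by metis
qed

lemma comp_cstr:
  assumes rg: "ribbon_graph G" and C: "C \<in> components G" and ne: "edges_at G C \<noteq> {}"
  shows "cstr (edges_at G C) (ralpha G)"
proof
  let ?E = "edges_at G C" let ?K = "corners_of (edges_at G C)"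
  have Ksub: "?K \<subseteq> corners_of (redges G)" using edges_at_sub[of G C] by (auto simp: corners_of_def)
  have ax: "\<forall>c \<in> corners_of (redges G).
        ralpha G c \<in> corners_of (redges G) \<and> ralpha G (ralpha G c) = c \<and>
        ralpha G c \<noteq> c \<and> cvert G (ralpha G c) = cvert G c"
    using rg by (simp add: ribbon_graph_def)
  have vc: "\<forall>c \<in> corners_of (redges G). \<forall>d \<in> corners_of (redges G).
        cvert G c = cvert G d \<longrightarrow> (c, d) \<in> (vertex_circle_rel G)\<^sup>*"
    using rg by (simp add: ribbon_graph_def)
  show "finite ?E" using rg edges_at_sub by (metis finite_subset ribbon_graph_def)
  show "?E \<noteq> {}" by (rule ne)
  show "ralpha G c \<in> ?K" if c: "c \<in> ?K" for c
  proof -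
    have cR: "c \<in> corners_of (redges G)" using c Ksub by auto
    have a: "ralpha G c \<in> corners_of (redges G)" "cvert G (ralpha G c) = cvert G c" using ax cR by auto
    have "cvert G c \<in> C" by (rule cvert_in[OF C c])
    obtain e i j where ec: "ralpha G c = (e,i,j)" by (cases "ralpha G c") auto
    have "e \<in> redges G" using a(1) ec by (simp add: corners_of_def)
    moreover have "rinc G e i \<in> C" using a(2) \<open>cvert G c \<in> C\<close> ec by (simp add: cvert_def)
    ultimately have "e \<in> ?E" unfolding edges_at_def by (cases i) auto
    thus ?thesis using ec by (simp add: corners_of_def)
  qed
  show "ralpha G (ralpha G c) = c" if "c \<in> ?K" for c using that Ksub ax by auto
  show "ralpha G c \<noteq> c" if "c \<in> ?K" for c using that Ksub ax by auto
  show "X = ?K" if X: "X \<subseteq> ?K" "X \<noteq> {}" "\<forall>c\<in>X. ralpha G c \<in> X" "\<forall>c\<in>X. \<forall>i j. (fst c,i,j) \<in> X" for X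
  proof -
    have a: "d \<in> X" if c: "c \<in> X" and d: "d \<in> corners_of (redges G)" and cd: "cvert G d = cvert G c" for c d
    proof -
      have cR: "c \<in> corners_of (redges G)" using c X(1) Ksub by auto
      have "(c,d) \<in> (vertex_circle_rel G)\<^sup>*" using vc cR d cd by metis
      thus ?thesis using c
      proof (induction rule: rtrancl_induct)
        case base thus ?case .
      next
        case (step y z)
        have yX: "y \<in> X" using step by auto
        from step.hyps(2) have "z = ralpha G y \<or> z = cbeta y" by (auto simp: vertex_circle_rel_def)
        thus ?case
        proof
          assume "z = ralpha G y" thus ?thesis using X(3) yX by auto
        next
          assume "z = cbeta y"
          thus ?thesis using X(4) yX by (cases y) (auto simp: cbeta_def)
        qed
      qed
    qed
    obtain c0 where c0: "c0 \<in> X" using X(2) by auto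
    have c0C: "cvert G c0 \<in> C" by (rule cvert_in[OF C]) (use X(1) c0 in auto)
    have VX: "\<exists>c\<in>X. cvert G c = u" if u: "u \<in> C" for u
    proof -
      have "(cvert G c0, u) \<in> areach G" using comp_same[OF C c0C] u by auto
      thus ?thesis
      proof (induction rule: rtrancl_induct)
        case base thus ?case using c0 by auto
      next
        case (step w w')
        then obtain c where c: "c \<in> X" "cvert G c = w" by auto
        from step.hyps(2) obtain e i where ei: "e \<in> redges G" "w = rinc G e i" "w' = rinc G e (\<not> i)"
          by (auto simp: adj_rel_def)
        have "(e,i,False) \<in> X"
          using a[OF c(1), of "(e,i,False)"] ei c by (auto simp: corners_of_def cvert_def)
        hence "(e,\<not> i,False) \<in> X" using X(4) by fastforce
        thus ?case using ei by (intro bexI[of _ "(e,\<not> i,False)"]) (auto simp: cvert_def)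
      qed
    qed
    show "X = ?K"
    proof
      show "X \<subseteq> ?K" by (rule X(1))
      show "?K \<subseteq> X"
      proof
        fix d assume d: "d \<in> ?K"
        obtain c where c: "c \<in> X" "cvert G c = cvert G d" using VX[OF cvert_in[OF C d]] by auto
        show "d \<in> X" using a[OF c(1), of d] d Ksub c(2) by auto
      qed
    qed
  qed
qed

lemma isolated_empty:
  assumes C: "C \<in> components G" and ne: "edges_at G C \<noteq> {}"
  shows "isolated_in G C = {}"
proof (rule ccontr)
  assume "isolated_in G C \<noteq> {}"
  then obtain v where v: "v \<in> C" "\<forall>e \<in> redges G. \<forall>i. rinc G e i \<noteq> v" by (auto simp: isolated_in_def)
  have "C = areach G `` {v}" by (rule comp_same[OF C v(1)])
  obtain e where e: "e \<in> edges_at G C" using ne by auto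
  have "rinc G e False \<in> C" by (rule edges_at_rinc[OF C e])
  hence "(v, rinc G e False) \<in> areach G" using \<open>C = areach G `` {v}\<close> by auto
  hence "v = rinc G e False \<or> (\<exists>y. (v,y) \<in> adj_rel G)"
    by (induction rule: converse_rtrancl_induct) auto
  hence "rinc G e False = v" using v(2) by (auto simp: adj_rel_def)
  thus False using v(2) e edges_at_sub[of G C] by blast
qed

lemma num_eq:
  assumes rg: "ribbon_graph G" and C: "C \<in> components G" and ne: "edges_at G C \<noteq> {}"
  shows "num_boundary_components G C F =
     card (corners_of (edges_at G C) // (cstr.bR (edges_at G C) (ralpha G) (rtwist G) F)\<^sup>*)"
proof -
  let ?E = "edges_at G C"
  interpret cstr ?E "ralpha G" "rtwist G" by (rule comp_cstr[OF rg C ne])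
  have ms: "mstep (lam F) c = (if fst c \<in> F then ceps G c else cbeta c)" for c
    by (cases c) (auto simp: mstep_def lam_def ceps_def cbeta_def)
  have eq: "(c,d) \<in> boundary_rel G C (F \<inter> ?E) \<longleftrightarrow> (c,d) \<in> bR F" for c d
  proof (cases "c \<in> K \<and> d \<in> K")
    case True
    hence "fst c \<in> ?E" "fst d \<in> ?E" by (auto simp: memK)
    thus ?thesis using True unfolding boundary_rel_def bR_def bstep_def ms by (auto split: if_splits)
  next
    case False thus ?thesis unfolding boundary_rel_def bR_def by auto
  qed
  have "boundary_rel G C (F \<inter> ?E) = bR F"
    by (intro set_eqI) (metis eq surj_pair)
  thus ?thesis using isolated_empty[OF C ne] by (simp add: num_boundary_components_def)
qed

lemma num_noedges:
  assumes C: "C \<in> components G" and e: "edges_at G C = {}"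
  shows "num_boundary_components G C F = 1"
proof -
  obtain v0 where v0: "v0 \<in> rverts G" "C = areach G `` {v0}" using comp_class[OF C] by auto
  have v0C: "v0 \<in> C" using v0 by auto
  have noinc: "\<forall>e' \<in> redges G. \<forall>i. rinc G e' i \<notin> C"
  proof (intro ballI allI notI)
    fix e' i assume "e' \<in> redges G" "rinc G e' i \<in> C"
    hence "e' \<in> edges_at G C" using edge_both[OF C] by (auto simp: edges_at_def)
    thus False using e by simp
  qed
  have "C = {v0}"
  proof
    show "C \<subseteq> {v0}"
    proof
      fix u assume "u \<in> C"
      hence "(v0,u) \<in> areach G" using v0 by auto
      hence "v0 = u \<or> (\<exists>y. (v0,y) \<in> adj_rel G)"
        by (induction rule: converse_rtrancl_induct) auto
      thus "u \<in> {v0}" using noinc v0C by (auto simp: adj_rel_def)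
    qed
    show "{v0} \<subseteq> C" using v0C by auto
  qed
  have "isolated_in G C = C" using noinc by (auto simp: isolated_in_def)
  thus ?thesis using e \<open>C = {v0}\<close> by (simp add: num_boundary_components_def corners_of_def quotient_def)
qed

lemma num_local: "F \<inter> edges_at G C = F' \<inter> edges_at G C \<Longrightarrow>
   num_boundary_components G C F = num_boundary_components G C F'"
  by (simp add: num_boundary_components_def)



lemma Q_tog:
  assumes rg: "ribbon_graph G" and B: "B \<in> quasi_trees G" and C0: "C0 \<in> components G"
    and S: "S \<subseteq> edges_at G C0" and n: "num_boundary_components G C0 (symdiff B S) = 1"
  shows "symdiff B S \<in> quasi_trees G"
  unfolding quasi_trees_def
proof (intro CollectI conjI ballI)
  show "symdiff B S \<subseteq> redges G"
    using B S edges_at_sub[of G C0] by (auto simp: quasi_trees_def symdiff_def)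
  fix C assume C: "C \<in> components G"
  show "num_boundary_components G C (symdiff B S) = 1"
  proof (cases "C = C0")
    case True thus ?thesis using n by simp
  next
    case False
    have "S \<inter> edges_at G C = {}" using edges_at_disj[OF C C0] S False by auto
    hence "symdiff B S \<inter> edges_at G C = B \<inter> edges_at G C" by (auto simp: symdiff_def)
    hence "num_boundary_components G C (symdiff B S) = num_boundary_components G C B"
      by (rule num_local)
    thus ?thesis using B C by (simp add: quasi_trees_def)
  qed
qed

theorem corollary2p33:
  fixes G :: "('v, 'e) ribbon_graph"
  assumes "ribbon_graph G"
  shows "strong_delta_matroid (redges G) (quasi_trees G)"
proof -
  note rg = assms
  have finE: "finite (redges G)" using rg by (simp add: ribbon_graph_def)
  have sub: "\<forall>B\<in>quasi_trees G. B \<subseteq> redges G" by (simp add: quasi_trees_def)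
  have strongp: "\<forall>B\<in>quasi_trees G. \<forall>B'\<in>quasi_trees G. \<forall>x\<in>symdiff B B'.
        \<exists>y\<in>symdiff B B'. symdiff B {x, y} \<in> quasi_trees G \<and> symdiff B' {x, y} \<in> quasi_trees G"
  proof (intro ballI)
    fix B B' x assume B: "B \<in> quasi_trees G" and B': "B' \<in> quasi_trees G" and x: "x \<in> symdiff B B'"
    have xE: "x \<in> redges G" using x B B' by (auto simp: quasi_trees_def symdiff_def)
    define v where "v = rinc G x False"
    have v: "v \<in> rverts G" using rg xE by (simp add: ribbon_graph_def v_def)
    define C0 where "C0 = areach G `` {v}"
    have C0: "C0 \<in> components G" unfolding C0_def components_def by (rule quotientI[OF v])
    have xC: "x \<in> edges_at G C0" using xE by (auto simp: edges_at_def C0_def v_def)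
    have ne: "edges_at G C0 \<noteq> {}" using xC by auto
    interpret cstr "edges_at G C0" "ralpha G" "rtwist G" by (rule comp_cstr[OF rg C0 ne])
    have sB: "singleL (lam B)" using B C0 num_eq[OF rg C0 ne, of B] single_iff
      by (simp add: quasi_trees_def)
    have sB': "singleL (lam B')" using B' C0 num_eq[OF rg C0 ne, of B'] single_iff
      by (simp add: quasi_trees_def)
    obtain y where y: "y \<in> edges_at G C0" "y \<in> symdiff B B'"
        "singleL (lam (symdiff B {x,y}))" "singleL (lam (symdiff B' {x,y}))"
      using strong[OF sB sB' xC x] by blast
    have S: "{x,y} \<subseteq> edges_at G C0" using xC y by auto
    have "symdiff B {x,y} \<in> quasi_trees G"
      by (rule Q_tog[OF rg B C0 S]) (use y(3) num_eq[OF rg C0 ne] single_iff in auto)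
    moreover have "symdiff B' {x,y} \<in> quasi_trees G"
      by (rule Q_tog[OF rg B' C0 S]) (use y(4) num_eq[OF rg C0 ne] single_iff in auto)
    ultimately show "\<exists>y\<in>symdiff B B'. symdiff B {x, y} \<in> quasi_trees G \<and> symdiff B' {x, y} \<in> quasi_trees G"
      using y(2) by blast
  qed
  have ne: "quasi_trees G \<noteq> {}"
  proof -
    have "\<forall>C\<in>components G. \<exists>F. F \<subseteq> edges_at G C \<and> num_boundary_components G C F = 1"
    proof
      fix C assume C: "C \<in> components G"
      show "\<exists>F. F \<subseteq> edges_at G C \<and> num_boundary_components G C F = 1"
      proof (cases "edges_at G C = {}")
        case True thus ?thesis using num_noedges[OF C True] by blast
      next
        case False
        interpret cstr "edges_at G C" "ralpha G" "rtwist G" by (rule comp_cstr[OF rg C False])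
        obtain F where F: "F \<subseteq> edges_at G C" "singleL (lam F)" using exists_single by blast
        thus ?thesis using num_eq[OF rg C False, of F] single_iff by auto
      qed
    qed
    then obtain f where f: "\<forall>C\<in>components G. f C \<subseteq> edges_at G C \<and> num_boundary_components G C (f C) = 1"
      by metis
    define Fg where "Fg = \<Union> (f ` components G)"
    have "Fg \<in> quasi_trees G"
      unfolding quasi_trees_def
    proof (intro CollectI conjI ballI)
      show "Fg \<subseteq> redges G" using f edges_at_sub by (fastforce simp: Fg_def)
      fix C assume C: "C \<in> components G"
      have "Fg \<inter> edges_at G C = f C \<inter> edges_at G C"
      proof
        show "Fg \<inter> edges_at G C \<subseteq> f C \<inter> edges_at G C"
        proof
          fix e assume e: "e \<in> Fg \<inter> edges_at G C"
          then obtain C' where C': "C' \<in> components G" "e \<in> f C'" by (auto simp: Fg_def)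
          have "e \<in> edges_at G C'" using f C' by auto
          hence "C' = C" using edges_at_disj[OF C'(1) C] e by auto
          thus "e \<in> f C \<inter> edges_at G C" using C' e by auto
        qed
        show "f C \<inter> edges_at G C \<subseteq> Fg \<inter> edges_at G C" using C by (auto simp: Fg_def)
      qed
      hence "num_boundary_components G C Fg = num_boundary_components G C (f C)" by (rule num_local)
      thus "num_boundary_components G C Fg = 1" using f C by simp
    qed
    thus ?thesis by auto
  qed
  show ?thesis
    unfolding strong_delta_matroid_def delta_matroid_def
    using finE ne sub strongp by blast
qed


end
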